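(* Consider a $k$-armed Bernoulli bandit in which the reward of arm $a\in\{1,\dots,k\}$ is distributed as $\mathrm{Bernoulli}(\theta_a)$ with unknown $\theta_a\in[0,1]$, and consider the stochastic-dominance Thompson sampling algorithm (SD\_TS) described below. Let $D$ denote the total variation distance. Then SD\_TS is $(2,0,0)$-subjectively fair with respect to $D$; that is, with probability $1$, for every round $t$ and every pair of arms $i,j$, $$D(\pi_t(i)\,\|\,\pi_t(j)) \le 2\, D(r_i(h^t)\,\|\,r_j(h^t)).$$
   Context: Algorithm SD\_TS: for each arm $a$ initialise $S_a=F_a=1/2$. In each round $t=1,2,\dots$: for each arm $a$, sample $\theta_a(t)\sim\mathrm{Beta}(S_a,F_a)$, then sample $\tilde r_a(t)\sim\mathrm{Bernoulli}(\theta_a(t))$; play $a_t=\arg\max_a \tilde r_a(t)$ (ties broken uniformly at random); observe the true reward $r_{a_t}(t)$ of the played arm and set $S_{a_t}\leftarrow S_{a_t}+1$ if $r_{a_t}(t)=1$, else $F_{a_t}\leftarrow F_{a_t}+1$. Notation: $h^t=(a_1,r_{a_1}(1),\dots,a_t,r_{a_t}(t))$ is the history; $\pi_t(i)$ is the probability (given the history) that the algorithm plays arm $i$ in round $t$. The decision maker's initial belief is the uninformed prior $\mathrm{Beta}(1/2,1/2)$ on each $\theta_i$, with posterior $\beta(\theta_i\mid h^t)$; the marginal (posterior predictive) reward distribution of arm $i$ is $r_i(h^t)=\int P(r_i\mid\theta_i)\,d\beta(\theta_i\mid h^t)$. For numbers $p,q\in[0,1]$, $D(p\|q)$ denotes the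 divergence between the Bernoulli distributions with parameters $p$ and $q$. Definition: a bandit process is $(\epsilon_1,\epsilon_2,\delta)$-subjectively fair w.r.t. a divergence $D$ ($\epsilon_1,\epsilon_2\ge0$, $0\le\delta\le1$) if with probability at least $1-\delta$, for every round $t$ and every pair of arms $i,j$, $D(\pi_t(i)\|\pi_t(j))\le \epsilon_1 D(r_i(h^t)\|r_j(h^t))+\epsilon_2$. *)

theory Defs
  imports "HOL-Probability.Probability"
begin

text \<open>Arms are 1..k. A history is a list of (played arm, observed reward) pairs.\<close>

definition succ_cnt :: "(nat \<times> bool) list \<Rightarrow> nat \<Rightarrow> nat" where
  "succ_cnt h a = length (filter (\<lambda>(b, r). b = a \<and> r) h)"

definition fail_cnt :: "(nat \<times> bool) list \<Rightarrow> nat \<Rightarrow> nat" where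
  "fail_cnt h a = length (filter (\<lambda>(b, r). b = a \<and> \<not> r) h)"

definition S_par :: "(nat \<times> bool) list \<Rightarrow> nat \<Rightarrow> real" where
  "S_par h a = 1/2 + real (succ_cnt h a)"

definition F_par :: "(nat \<times> bool) list \<Rightarrow> nat \<Rightarrow> real" where
  "F_par h a = 1/2 + real (fail_cnt h a)"

definition beta_dens :: "real \<Rightarrow> real \<Rightarrow> real \<Rightarrow> real" where
  "beta_dens S F \<theta> =
     (if 0 < \<theta> \<and> \<theta> < 1 then \<theta> powr (S - 1) * (1 - \<theta>) powr (F - 1) / Beta S F else 0)"

definition beta_measure :: "real \<Rightarrow> real \<Rightarrow> real measure" where
  "beta_measure S F = density lborel (\<lambda>\<theta>. ennreal (beta_dens S F \<theta>))"

definition sample_prob :: "real \<Rightarrow> real \<Rightarrow> real" where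
  "sample_prob S F =
     measure (beta_measure S F \<bind> (\<lambda>\<theta>. measure_pmf (bernoulli_pmf \<theta>))) {True}"

definition argmax_set :: "nat set \<Rightarrow> (nat \<Rightarrow> bool) \<Rightarrow> nat set" where
  "argmax_set A x = {a \<in> A. \<forall>b\<in>A. x b \<le> x a}"

text \<open>Distribution of the arm played by SD_TS given history h: the sampled rewards are
  independent across arms; ties broken uniformly at random.\<close>
definition play_pmf :: "nat \<Rightarrow> (nat \<times> bool) list \<Rightarrow> nat pmf" where
  "play_pmf k h =
     Pi_pmf {1..k} False (\<lambda>a. bernoulli_pmf (sample_prob (S_par h a) (F_par h a)))
       \<bind> (\<lambda>x. pmf_of_set (argmax_set {1..k} x))"

definition play_prob :: "nat \<Rightarrow> (nat \<times> bool) list \<Rightarrow> nat \<Rightarrow> real" where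
  "play_prob k h i = pmf (play_pmf k h) i"

definition lik :: "(nat \<times> bool) list \<Rightarrow> nat \<Rightarrow> real \<Rightarrow> real" where
  "lik h i \<theta> = \<theta> ^ succ_cnt h i * (1 - \<theta>) ^ fail_cnt h i"

definition post_dens :: "(nat \<times> bool) list \<Rightarrow> nat \<Rightarrow> real \<Rightarrow> real" where
  "post_dens h i \<theta> = lik h i \<theta> * beta_dens (1/2) (1/2) \<theta> /
      (LINT \<phi>|lborel. lik h i \<phi> * beta_dens (1/2) (1/2) \<phi>)"

definition pred_prob :: "(nat \<times> bool) list \<Rightarrow> nat \<Rightarrow> real" where
  "pred_prob h i = (LINT \<theta>|lborel. \<theta> * post_dens h i \<theta>)"

definition tv_bern :: "real \<Rightarrow> real \<Rightarrow> real" where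
  "tv_bern p q = (1/2) * (\<Sum>b\<in>UNIV. \<bar>pmf (bernoulli_pmf p) b - pmf (bernoulli_pmf q) b\<bar>)"

end

theory Submission
  imports Defs
begin


definition gb :: "real \<Rightarrow> real \<Rightarrow> real \<Rightarrow> real" where
  "gb a b t = (if 0 < t \<and> t < 1 then t powr (a - 1) * (1 - t) powr (b - 1) else 0)"

lemma gb_meas[measurable]: "gb a b \<in> borel_measurable borel"
proof -
  have 1: "(\<lambda>t::real. t powr (a-1)) \<in> borel_measurable borel"
    by (rule powr_real_measurable) auto
  have 2: "(\<lambda>t::real. (1-t) powr (b-1)) \<in> borel_measurable borel"
    by (rule powr_real_measurable) auto
  have 3: "{x \<in> space borel. 0 < x \<and> x < (1::real)} \<in> sets borel"
  proof -
    have "{x \<in> space borel. 0 < x \<and> x < (1::real)} = {0<..<1}" by auto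
    then show ?thesis by simp
  qed
  show ?thesis unfolding gb_def
    by (rule measurable_If[OF borel_measurable_times[OF 1 2] _ 3]) simp
qed


lemma gb_nonneg: "0 \<le> gb a b t" by (simp add: gb_def)

lemma gb_hasint:
  assumes "a > 0" "b > 0"
  shows "(gb a b has_integral Beta a b) UNIV"
proof -
  have "((\<lambda>t. if t \<in> {0..1} then t powr (a - 1) * (1 - t) powr (b - 1) else 0) has_integral Beta a b) UNIV"
    unfolding has_integral_restrict_UNIV by (rule has_integral_Beta_real[OF assms])
  moreover have "(\<lambda>t. if t \<in> {0..1} then t powr (a - 1) * (1 - t) powr (b - 1) else 0) = gb a b"
    by (rule ext) (auto simp: gb_def)
  ultimately show ?thesis by simp
qed

lemma Beta_pos: "a > 0 \<Longrightarrow> b > 0 \<Longrightarrow> Beta a b > (0::real)"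
  by (simp add: Beta_def Gamma_real_pos)

lemma lborel_int:
  fixes f :: "real \<Rightarrow> real"
  assumes f: "f \<in> borel_measurable borel" "\<And>x. 0 \<le> f x" "(f has_integral r) UNIV"
  shows "integral\<^sup>L lborel f = r"
proof -
  have nn: "integral\<^sup>N lborel f = ennreal r" using nn_integral_has_integral_lborel[OF f] by simp
  have i: "integrable lborel f"
    by (rule integrableI_nonneg) (use f nn in simp_all)
  show ?thesis using integral_unique[OF f(3)] integral_lborel[OF i] by simp
qed

lemma gb_scaled_int:
  assumes "a > 0" "b > 0" "c > 0"
  shows "(LINT t|lborel. gb a b t / c) = Beta a b / c"
  apply (rule lborel_int)
    using gb_meas apply simp
  using assms gb_nonneg apply simp
  using has_integral_divide[OF gb_hasint[OF assms(1,2)], of c] by simp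

lemma powr_shift:
  assumes "t > 0"
  shows "t ^ n * t powr c = t powr (real n + c)"
  using assms by (simp add: powr_add powr_realpow)

lemma pred_prob_eq:
  "pred_prob h i = Beta (S_par h i + 1) (F_par h i) / Beta (S_par h i) (F_par h i)"
proof -
  define s where "s = succ_cnt h i"
  define f where "f = fail_cnt h i"
  define S where "S = S_par h i"
  define F where "F = F_par h i"
  define B0 where "B0 = Beta (1/2) (1/2::real)"
  have S: "S = 1/2 + real s" and F: "F = 1/2 + real f" by (simp_all add: S_def F_def S_par_def F_par_def s_def f_def)
  have Spos: "S > 0" "F > 0" using S F by simp_all
  have B0: "B0 > 0" unfolding B0_def by (rule Beta_pos) auto
  have eq1: "lik h i t * beta_dens (1/2) (1/2) t = gb S F t / B0" for t
  proof (cases "0 < t \<and> t < 1")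
    case True
    have a: "t ^ s * t powr (1/2 - 1) = t powr (S - 1)"
      using True by (simp add: powr_shift S)
    have b: "(1 - t) ^ f * (1 - t) powr (1/2 - 1) = (1 - t) powr (F - 1)"
      using True by (subst powr_shift) (simp_all add: F)
    show ?thesis using True
      unfolding lik_def beta_dens_def gb_def B0_def s_def[symmetric] f_def[symmetric]
      by (simp add: a[symmetric] b[symmetric] algebra_simps)
  qed (auto simp: lik_def beta_dens_def gb_def)
  define Z where "Z = (LINT t|lborel. lik h i t * beta_dens (1/2) (1/2) t)"
  have Z: "Z = Beta S F / B0" unfolding Z_def eq1 using gb_scaled_int Spos B0 by blast
  have Zpos: "Z > 0" using Z Beta_pos[OF Spos] B0 by simp
  have pd: "post_dens h i t = lik h i t * beta_dens (1/2) (1/2) t / Z" for t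
    unfolding post_dens_def Z_def by simp
  have eq2: "t * post_dens h i t = gb (S + 1) F t / (B0 * Z)" for t
  proof (cases "0 < t \<and> t < 1")
    case True
    have a: "t * t powr (S - 1) = t powr S"
      using True powr_add[of t 1 "S - 1"] by simp
    show ?thesis
      unfolding pd eq1 using True
      unfolding gb_def by (simp add: a[symmetric])
  qed (auto simp: pd lik_def beta_dens_def gb_def)
  have "pred_prob h i = Beta (S + 1) F / (B0 * Z)"
    unfolding pred_prob_def eq2 using gb_scaled_int Spos B0 Zpos by simp
  also have "\<dots> = Beta (S + 1) F / Beta S F" using B0 unfolding Z by simp
  finally show ?thesis unfolding S_def F_def .
qed



lemma pmf_bern_gen: "pmf (bernoulli_pmf p) b = (if b then min 1 (max 0 p) else 1 - min 1 (max 0 p))"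
  by (simp add: bernoulli_pmf.rep_eq)
lemma m1: "(\<lambda>t::real. min 1 (max 0 t)) \<in> borel_measurable borel"
  by (intro borel_measurable_min borel_measurable_max measurable_ident_sets measurable_const) auto
lemma m2: "(\<lambda>t::real. ennreal (if b then min 1 (max 0 t) else 1 - min 1 (max 0 t))) \<in> borel_measurable borel"
  using m1 by (cases b) (simp_all add: borel_measurable_diff)
lemma m3: "(\<lambda>t::real. \<Sum>b\<in>A. ennreal (if b then min 1 (max 0 t) else 1 - min 1 (max 0 t))) \<in> borel_measurable borel"
  by (rule borel_measurable_sum) (rule m2)

lemma bern_meas: "(\<lambda>t. measure_pmf (bernoulli_pmf t)) \<in> borel \<rightarrow>\<^sub>M subprob_algebra (count_space UNIV)"
proof (rule measurable_subprob_algebra)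
  fix a show "subprob_space (measure_pmf (bernoulli_pmf a))" by (rule subprob_space_measure_pmf)
next
  fix a show "sets (measure_pmf (bernoulli_pmf a)) = sets (count_space UNIV)" by simp
next
  fix A :: "bool set"
  have "(\<lambda>a. emeasure (measure_pmf (bernoulli_pmf a)) A) = (\<lambda>a. \<Sum>b\<in>A. ennreal (if b then min 1 (max 0 a) else 1 - min 1 (max 0 a)))"
    by (rule ext) (simp add: emeasure_measure_pmf_finite pmf_bern_gen)
  moreover have "(\<lambda>a::real. \<Sum>b\<in>A. ennreal (if b then min 1 (max 0 a) else 1 - min 1 (max 0 a))) \<in> borel_measurable borel"
    by (rule m3)
  ultimately show "(\<lambda>a. emeasure (measure_pmf (bernoulli_pmf a)) A) \<in> borel_measurable borel" by simp
qed

lemma beta_dens_meas: "(\<lambda>t. ennreal (beta_dens S F t)) \<in> borel_measurable borel"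
proof -
  have "(\<lambda>t. beta_dens S F t) = (\<lambda>t. gb S F t / Beta S F)"
    by (rule ext) (simp add: beta_dens_def gb_def)
  moreover have "(\<lambda>t. gb S F t / Beta S F) \<in> borel_measurable borel"
    by (rule borel_measurable_divide[OF gb_meas borel_measurable_const])
  ultimately show ?thesis using measurable_compose[OF _ measurable_ennreal] by simp
qed

lemma sample_prob_eq:
  assumes S: "S > 0" and F: "F > 0"
  shows "sample_prob S F = Beta (S + 1) F / Beta S F"
proof -
  let ?M = "beta_measure S F"
  have sets: "sets ?M = sets borel" by (simp add: beta_measure_def)
  have K: "(\<lambda>t. measure_pmf (bernoulli_pmf t)) \<in> ?M \<rightarrow>\<^sub>M subprob_algebra (count_space UNIV)"
    using bern_meas unfolding measurable_cong_sets[OF sets refl] .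
  have sp: "space ?M \<noteq> {}" by (simp add: beta_measure_def)
  have "emeasure (?M \<bind> (\<lambda>t. measure_pmf (bernoulli_pmf t))) {True}
      = (\<integral>\<^sup>+t. emeasure (measure_pmf (bernoulli_pmf t)) {True} \<partial>?M)"
    by (rule emeasure_bind[OF sp K]) simp
  also have "\<dots> = (\<integral>\<^sup>+t. ennreal (pmf (bernoulli_pmf t) True) \<partial>?M)"
    by (simp add: emeasure_pmf_single)
  also have "\<dots> = (\<integral>\<^sup>+t. ennreal (beta_dens S F t) * ennreal (pmf (bernoulli_pmf t) True) \<partial>lborel)"
    unfolding beta_measure_def
  proof (rule nn_integral_density)
    show "(\<lambda>t. ennreal (beta_dens S F t)) \<in> borel_measurable lborel" using beta_dens_meas by simp
    have "(\<lambda>t. ennreal (pmf (bernoulli_pmf t) True)) = (\<lambda>t. ennreal (if True then min 1 (max 0 t) else 1 - min 1 (max 0 t)))"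
      by (simp add: pmf_bern_gen)
    then show "(\<lambda>t. ennreal (pmf (bernoulli_pmf t) True)) \<in> borel_measurable lborel" using m2[of True] by simp
  qed
  also have "\<dots> = (\<integral>\<^sup>+t. ennreal (gb (S + 1) F t / Beta S F) \<partial>lborel)"
  proof (rule nn_integral_cong)
    fix t :: real
    show "ennreal (beta_dens S F t) * ennreal (pmf (bernoulli_pmf t) True) = ennreal (gb (S + 1) F t / Beta S F)"
    proof (cases "0 < t \<and> t < 1")
      case True
      have a: "t powr (S - 1) * t = t powr S"
        using True powr_add[of t 1 "S - 1"] by simp
      have "beta_dens S F t * pmf (bernoulli_pmf t) True = gb (S + 1) F t / Beta S F"
        using True by (simp add: beta_dens_def gb_def a[symmetric] algebra_simps)
      moreover have "beta_dens S F t \<ge> 0" using True Beta_pos[OF S F] by (simp add: beta_dens_def)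
      ultimately show ?thesis by (simp add: ennreal_mult'[symmetric])
    next
      case False
      then show ?thesis by (auto simp: beta_dens_def gb_def)
    qed
  qed
  also have "\<dots> = ennreal (Beta (S + 1) F / Beta S F)"
  proof (rule nn_integral_has_integral_lborel)
    show "(\<lambda>t. gb (S + 1) F t / Beta S F) \<in> borel_measurable borel" using gb_meas by simp
    show "\<And>t. 0 \<le> gb (S + 1) F t / Beta S F" using gb_nonneg Beta_pos[OF S F] by simp
    show "((\<lambda>t. gb (S + 1) F t / Beta S F) has_integral Beta (S + 1) F / Beta S F) UNIV"
      using has_integral_divide[OF gb_hasint, of "S+1" F "Beta S F"] S F by simp
  qed
  finally have e: "emeasure (?M \<bind> (\<lambda>t. measure_pmf (bernoulli_pmf t))) {True} = ennreal (Beta (S + 1) F / Beta S F)" .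
  have "Beta (S + 1) F / Beta S F \<ge> 0" using Beta_pos[OF S F] Beta_pos[of "S+1" F] S F by simp
  then show ?thesis unfolding sample_prob_def measure_def e by simp
qed


definition sw :: "nat \<Rightarrow> nat \<Rightarrow> nat \<Rightarrow> nat" where
  "sw i j x = (if x = i then j else if x = j then i else x)"

lemma sw_sw[simp]: "sw i j (sw i j x) = x" by (auto simp: sw_def)

lemma argmax_swap_mem:
  assumes "i \<in> A" "j \<in> A"
  shows "a \<in> argmax_set A (z \<circ> sw i j) \<longleftrightarrow> sw i j a \<in> argmax_set A z"
proof -
  let ?t = "sw i j"
  have tA: "\<And>b. ?t b \<in> A \<longleftrightarrow> b \<in> A" using assms by (auto simp: sw_def)
  have tt: "\<And>b. ?t (?t b) = b" by simp
  have "(\<forall>b\<in>A. z (?t b) \<le> z (?t a)) \<longleftrightarrow> (\<forall>b\<in>A. z b \<le> z (?t a))"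
    using tA tt by metis
  then show ?thesis unfolding argmax_set_def using tA by simp
qed

lemma argmax_swap:
  assumes "i \<in> A" "j \<in> A"
  shows "argmax_set A (z \<circ> sw i j) = sw i j ` argmax_set A z"
proof -
  let ?t = "sw i j"
  have tt: "\<And>b. ?t (?t b) = b" by simp
  show ?thesis
  proof (rule set_eqI)
    fix a
    show "a \<in> argmax_set A (z \<circ> ?t) \<longleftrightarrow> a \<in> ?t ` argmax_set A z"
      unfolding argmax_swap_mem[OF assms]
      by (metis image_iff tt)
  qed
qed

lemma argmax_nonempty:
  assumes "finite A" "A \<noteq> {}"
  shows "argmax_set A x \<noteq> {}"
proof (cases "\<exists>a\<in>A. x a")
  case True
  then obtain a where "a \<in> A" "x a" by blast
  then have "a \<in> argmax_set A x" by (auto simp: argmax_set_def le_bool_def)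
  then show ?thesis by blast
next
  case False
  then obtain a where "a \<in> A" using assms by blast
  then have "a \<in> argmax_set A x" using False by (auto simp: argmax_set_def le_bool_def)
  then show ?thesis by blast
qed

lemma argmax_finite: "finite A \<Longrightarrow> finite (argmax_set A x)"
  by (auto simp: argmax_set_def)

lemma pmf_argmax_swap:
  assumes "finite A" "i \<in> A" "j \<in> A"
  shows "pmf (pmf_of_set (argmax_set A (z \<circ> sw i j))) i = pmf (pmf_of_set (argmax_set A z)) j"
proof -
  have ne: "argmax_set A z \<noteq> {}" using argmax_nonempty assms by blast
  have fin: "finite (argmax_set A z)" using argmax_finite assms by blast
  have inj: "inj (sw i j)" by (metis injI sw_sw)
  have "pmf_of_set (argmax_set A (z \<circ> sw i j)) = map_pmf (sw i j) (pmf_of_set (argmax_set A z))"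
    using argmax_swap[OF assms(2,3)] map_pmf_of_set_inj[OF inj_on_subset[OF inj] ne fin] by simp
  moreover have "sw i j j = i" by (simp add: sw_def)
  ultimately show ?thesis using pmf_map_inj'[OF inj] by metis
qed

lemma upd_sw: "i \<noteq> j \<Longrightarrow> y(j:=a, i:=b) = (y(j:=b, i:=a)) \<circ> sw i j"
  by (auto simp: sw_def fun_eq_iff)

lemma core:
  fixes p :: "nat \<Rightarrow> real"
  assumes fin: "finite A" and iA: "i\<in>A" "j\<in>A" "i\<noteq>j"
    and p: "0\<le>p i" "p i\<le>1" "0\<le>p j" "p j \<le> 1"
  defines "P \<equiv> Pi_pmf A False (\<lambda>a. bernoulli_pmf (p a)) \<bind> (\<lambda>x. pmf_of_set (argmax_set A x))"
  shows "\<bar>pmf P i - pmf P j\<bar> \<le> \<bar>p i - p j\<bar>"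
proof -
  define R where "R = A - {i,j}"
  have AR: "A = insert i (insert j R)" using iA by (auto simp: R_def)
  have finR: "finite R" using fin by (simp add: R_def)
  have niR: "i \<notin> insert j R" "j \<notin> R" using iA by (auto simp: R_def)
  define Q where "Q = Pi_pmf R False (\<lambda>a. bernoulli_pmf (p a))"
  define E where "E a b = Q \<bind> (\<lambda>y. pmf_of_set (argmax_set A (y(j:=b, i:=a))))" for a b
  have decomp: "P = bernoulli_pmf (p i) \<bind> (\<lambda>a. bernoulli_pmf (p j) \<bind> (\<lambda>b. E a b))"
    unfolding P_def E_def Q_def
    apply (subst (1) AR)
    apply (simp add: Pi_pmf_insert'[OF _ niR(1)] Pi_pmf_insert'[OF finR niR(2)] finR bind_assoc_pmf bind_return_pmf)
    done
  have sym: "pmf (E a b) j = pmf (E b a) i" for a b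
  proof -
    have "pmf (pmf_of_set (argmax_set A (y(j:=b, i:=a)))) j = pmf (pmf_of_set (argmax_set A (y(j:=a, i:=b)))) i" for y
      unfolding upd_sw[OF iA(3), of y a b] pmf_argmax_swap[OF fin iA(1,2)] ..
    then show ?thesis unfolding E_def pmf_bind by simp
  qed
  have val: "pmf P x = p i * (p j * pmf (E True True) x + (1 - p j) * pmf (E True False) x)
        + (1 - p i) * (p j * pmf (E False True) x + (1 - p j) * pmf (E False False) x)" for x
    unfolding decomp pmf_bind using p by (simp add: algebra_simps)
  define e where "e a b = pmf (E a b) i" for a b
  have "pmf P i - pmf P j = (p i - p j) * (e True False - e False True)"
    unfolding val sym e_def[symmetric] by (simp add: algebra_simps)
  moreover have "\<bar>e True False - e False True\<bar> \<le> 1"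
    unfolding e_def using pmf_le_1 pmf_nonneg by (smt (verit))
  ultimately show ?thesis
    by (simp add: abs_mult mult_left_le)
qed

lemma ratio_eq:
  assumes "S > 0" "F > (0::real)"
  shows "Beta (S + 1) F / Beta S F = S / (S + F)"
proof -
  have "S \<notin> \<int>\<^sub>\<le>\<^sub>0" using assms(1) nonpos_Ints_nonpos by force
  then have "(S + F) * Beta (S + 1) F = S * Beta S F" by (rule Beta_plus1_left)
  moreover have "Beta S F > 0" using Beta_pos assms by blast
  moreover have "S + F > 0" using assms by simp
  ultimately show ?thesis by (simp add: field_simps)
qed

lemma tv_abs:
  assumes "0 \<le> x" "x \<le> 1" "0 \<le> y" "y \<le> 1"
  shows "tv_bern x y = \<bar>x - y\<bar>"
  using assms by (simp add: tv_bern_def UNIV_bool)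

theorem theorem3p1:
  fixes k :: nat and h :: "(nat \<times> bool) list" and i j :: nat
  assumes "k \<ge> 1"
    and "set (map fst h) \<subseteq> {1..k}"
    and "i \<in> {1..k}" and "j \<in> {1..k}"
  shows "tv_bern (play_prob k h i) (play_prob k h j)
           \<le> 2 * tv_bern (pred_prob h i) (pred_prob h j)"
proof (cases "i = j")
  case True
  then show ?thesis by (simp add: tv_bern_def)
next
  case False
  define p where "p a = sample_prob (S_par h a) (F_par h a)" for a
  have Sp: "S_par h a > 0" "F_par h a > 0" for a by (simp_all add: S_par_def F_par_def)
  have pv: "p a = S_par h a / (S_par h a + F_par h a)" for a
    unfolding p_def sample_prob_eq[OF Sp] ratio_eq[OF Sp] ..
  have qv: "pred_prob h a = p a" for a
    unfolding pv pred_prob_eq ratio_eq[OF Sp] ..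
  have p01: "0 \<le> p a" "p a \<le> 1" for a
    unfolding pv using Sp[of a] by simp_all
  have "play_prob k h a = pmf (Pi_pmf {1..k} False (\<lambda>a. bernoulli_pmf (p a)) \<bind> (\<lambda>x. pmf_of_set (argmax_set {1..k} x))) a" for a
    unfolding play_prob_def play_pmf_def p_def ..
  then have "\<bar>play_prob k h i - play_prob k h j\<bar> \<le> \<bar>p i - p j\<bar>"
    using core[of "{1..k}" i j p] assms(3,4) False p01 by simp
  moreover have "tv_bern (play_prob k h i) (play_prob k h j) = \<bar>play_prob k h i - play_prob k h j\<bar>"
    by (rule tv_abs) (simp_all add: play_prob_def pmf_le_1)
  moreover have "tv_bern (pred_prob h i) (pred_prob h j) = \<bar>p i - p j\<bar>"
    unfolding qv by (rule tv_abs) (simp_all add: p01)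
  ultimately show ?thesis by linarith
qed

end
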